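(* Let $\chi\in\chi(G)$ be a character and $\lambda\in\Lambda^\chi$. There is a unique maximal subset $\mathcal M\subset[n]$ with respect to the property $L(\mathcal M)\subset S^\chi_\lambda$. Moreover $\mathcal M=\{i\in[n]:\langle\chi_i,\lambda\rangle\ge0\}$, and in particular $V([n]\setminus\mathcal M)=X_\lambda$.
   Context: $G$ diagonalizable over $\mathbf C$ acting on $X=\mathbf A^n_{\mathbf C}$ by $g\cdot x=(\chi_1(g)x_1,\dots,\chi_n(g)x_n)$. $\chi(G)$ characters, $\Gamma(G)$ one-parameter subgroups, pairing $\chi(\lambda(t))=t^{\langle\chi,\lambda\rangle}$ (extended to $\mathbf R$); fixed norm on $\Gamma(G)$ from an inner product on $\Gamma(G)_{\mathbf R}$ integral on $\Gamma(G)$. $[n]=\{1,\dots,n\}$. $X_\lambda=\{x:\lim_{t\to0}\lambda(t)x\text{ exists}\}=\{x:x_i=0\text{ whenever }\langle\chi_i,\lambda\rangle<0\}$. $x$ is $\chi$-unstable if some $\lambda$ with existing limit has $\langle\chi,\lambda\rangle<0$; for unstable $x$, $\lambda_{\chi,x}$ is the unique indivisible one-parameter subgroup with existing limit minimizing $\langle\chi,\lambda\rangle/\|\lambda\|$ among nonzero such. $\Lambda^\chi=\{\lambda_{\chi,x}:x\text{ unstable}\}$, $S^\chi_\lambda=\{x\text{ unstable}:\lambda_{\chi,x}=\lambda\}$. For $S\subset[n]$: $V(S)=\{x:x_i=0\ \forall i\in S\}$, $L(S)=\{x:x_i\ne0\iff i\in S\}$. *)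

theory Defs
  imports Complex_Main
begin

text \<open>Model of the torus data of a diagonalizable group G of rank r.
  One-parameter subgroups Gamma(G) = Z^r, represented as functions nat => int
  vanishing outside {0..<r}. A character chi is represented by its image in
  Hom(Gamma(G), Z) = Z^r (the torsion part of chi(G) pairs trivially), so the
  pairing is the dot product. The norm comes from an integer symmetric positive
  definite Gram matrix B. Points of A^n are x :: nat => complex, coordinates 1..n.\<close>

definition Gam :: "nat \<Rightarrow> (nat \<Rightarrow> int) set" where
  "Gam r = {l. \<forall>j\<ge>r. l j = 0}"

definition pair :: "nat \<Rightarrow> (nat \<Rightarrow> int) \<Rightarrow> (nat \<Rightarrow> int) \<Rightarrow> int" where
  "pair r a l = (\<Sum>j<r. a j * l j)"

definition nrm :: "nat \<Rightarrow> (nat \<Rightarrow> nat \<Rightarrow> int) \<Rightarrow> (nat \<Rightarrow> int) \<Rightarrow> real" where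
  "nrm r B l = sqrt (\<Sum>j<r. \<Sum>k<r. real_of_int (B j k * l j * l k))"

text \<open>X_lambda = points whose limit under lambda(t) as t -> 0 exists.\<close>
definition Xl :: "nat \<Rightarrow> nat \<Rightarrow> (nat \<Rightarrow> nat \<Rightarrow> int) \<Rightarrow> (nat \<Rightarrow> int) \<Rightarrow> (nat \<Rightarrow> complex) set" where
  "Xl n r chis l = {x. \<forall>i\<in>{1..n}. pair r (chis i) l < 0 \<longrightarrow> x i = 0}"

definition indivisible :: "nat \<Rightarrow> (nat \<Rightarrow> int) \<Rightarrow> bool" where
  "indivisible r l \<longleftrightarrow> l \<in> Gam r \<and> l \<noteq> (\<lambda>_. 0) \<and>
     \<not> (\<exists>k::int. k \<ge> 2 \<and> (\<exists>m\<in>Gam r. l = (\<lambda>j. k * m j)))"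

definition unstable :: "nat \<Rightarrow> nat \<Rightarrow> (nat \<Rightarrow> nat \<Rightarrow> int) \<Rightarrow> (nat \<Rightarrow> int) \<Rightarrow> (nat \<Rightarrow> complex) \<Rightarrow> bool" where
  "unstable n r chis chi x \<longleftrightarrow> (\<exists>l\<in>Gam r. x \<in> Xl n r chis l \<and> pair r chi l < 0)"

definition lam_chi :: "nat \<Rightarrow> nat \<Rightarrow> (nat \<Rightarrow> nat \<Rightarrow> int) \<Rightarrow> (nat \<Rightarrow> nat \<Rightarrow> int) \<Rightarrow> (nat \<Rightarrow> int)
     \<Rightarrow> (nat \<Rightarrow> complex) \<Rightarrow> (nat \<Rightarrow> int)" where
  "lam_chi n r B chis chi x = (THE l. indivisible r l \<and> x \<in> Xl n r chis l \<and>
     (\<forall>m\<in>Gam r. m \<noteq> (\<lambda>_. 0) \<and> x \<in> Xl n r chis m \<longrightarrow>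
        real_of_int (pair r chi l) / nrm r B l \<le> real_of_int (pair r chi m) / nrm r B m))"

definition LamChi :: "nat \<Rightarrow> nat \<Rightarrow> (nat \<Rightarrow> nat \<Rightarrow> int) \<Rightarrow> (nat \<Rightarrow> nat \<Rightarrow> int) \<Rightarrow> (nat \<Rightarrow> int)
     \<Rightarrow> (nat \<Rightarrow> int) set" where
  "LamChi n r B chis chi = lam_chi n r B chis chi ` {x. unstable n r chis chi x}"

definition S_chi :: "nat \<Rightarrow> nat \<Rightarrow> (nat \<Rightarrow> nat \<Rightarrow> int) \<Rightarrow> (nat \<Rightarrow> nat \<Rightarrow> int) \<Rightarrow> (nat \<Rightarrow> int)
     \<Rightarrow> (nat \<Rightarrow> int) \<Rightarrow> (nat \<Rightarrow> complex) set" where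
  "S_chi n r B chis chi l = {x. unstable n r chis chi x \<and> lam_chi n r B chis chi x = l}"

definition Vset :: "nat set \<Rightarrow> (nat \<Rightarrow> complex) set" where
  "Vset S = {x. \<forall>i\<in>S. x i = 0}"

definition Lset :: "nat \<Rightarrow> nat set \<Rightarrow> (nat \<Rightarrow> complex) set" where
  "Lset n S = {x. \<forall>i\<in>{1..n}. x i \<noteq> 0 \<longleftrightarrow> i \<in> S}"

end

theory Submission
  imports Defs
begin


locale qf =
  fixes r :: nat and B :: "nat \<Rightarrow> nat \<Rightarrow> int"
  assumes symB: "\<And>j k. B j k = B k j"
    and posB: "\<And>v::nat \<Rightarrow> real. (\<exists>j<r. v j \<noteq> 0) \<Longrightarrow>
                 (\<Sum>j<r. \<Sum>k<r. real_of_int (B j k) * v j * v k) > 0"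
begin

definition ip :: "(nat \<Rightarrow> real) \<Rightarrow> (nat \<Rightarrow> real) \<Rightarrow> real" where
  "ip u v = (\<Sum>j<r. \<Sum>k<r. real_of_int (B j k) * u j * v k)"
definition nm :: "(nat \<Rightarrow> real) \<Rightarrow> real" where "nm v = sqrt (ip v v)"
definition lf :: "(nat \<Rightarrow> real) \<Rightarrow> (nat \<Rightarrow> real) \<Rightarrow> real" where
  "lf a v = (\<Sum>j<r. a j * v j)"
definition isrv :: "(nat \<Rightarrow> real) \<Rightarrow> bool" where "isrv v \<longleftrightarrow> (\<forall>j. v j \<in> \<rat>)"

lemma ip_add1: "ip (\<lambda>j. u j + v j) w = ip u w + ip v w"
  by (simp add: ip_def algebra_simps sum.distrib)
lemma ip_diff1: "ip (\<lambda>j. u j - v j) w = ip u w - ip v w"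
  by (simp add: ip_def algebra_simps sum_subtractf)
lemma ip_scale1: "ip (\<lambda>j. c * u j) w = c * ip u w"
  by (simp add: ip_def sum_distrib_left algebra_simps)
lemma ip_sym: "ip u v = ip v u"
  unfolding ip_def by (subst sum.swap) (simp add: symB mult_ac)
lemma ip_add2: "ip w (\<lambda>j. u j + v j) = ip w u + ip w v"
  by (simp add: ip_def algebra_simps sum.distrib)
lemma ip_diff2: "ip w (\<lambda>j. u j - v j) = ip w u - ip w v"
  by (simp add: ip_def algebra_simps sum_subtractf)
lemma ip_scale2: "ip w (\<lambda>j. c * u j) = c * ip w u"
  by (simp add: ip_def sum_distrib_left algebra_simps)
lemma ip_minus1: "ip (\<lambda>j. - u j) w = - ip u w"
  using ip_scale1[of "-1" u w] by simp
lemma ip_zero1: "(\<forall>j<r. v j = 0) \<Longrightarrow> ip v w = 0"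
  by (simp add: ip_def)
lemma ip_zero2: "(\<forall>j<r. v j = 0) \<Longrightarrow> ip w v = 0"
  by (simp add: ip_def)
lemma ip_pos: "(\<exists>j<r. v j \<noteq> 0) \<Longrightarrow> ip v v > 0"
  using posB unfolding ip_def by blast
lemma ip_ge0: "ip v v \<ge> 0"
proof (cases "\<exists>j<r. v j \<noteq> 0")
  case True then show ?thesis using ip_pos[of v] by simp
next
  case False then show ?thesis by (simp add: ip_zero1)
qed
lemma ip_eq0: "ip v v = 0 \<Longrightarrow> \<forall>j<r. v j = 0"
  using ip_pos by fastforce

lemma lf_add: "lf a (\<lambda>j. u j + v j) = lf a u + lf a v"
  by (simp add: lf_def algebra_simps sum.distrib)
lemma lf_diff: "lf a (\<lambda>j. u j - v j) = lf a u - lf a v"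
  by (simp add: lf_def algebra_simps sum_subtractf)
lemma lf_scale: "lf a (\<lambda>j. c * u j) = c * lf a u"
  by (simp add: lf_def sum_distrib_left algebra_simps)
lemma lf_minus: "lf a (\<lambda>j. - u j) = - lf a u"
  using lf_scale[of a "-1" u] by simp
lemma lf_zero: "(\<forall>j<r. v j = 0) \<Longrightarrow> lf a v = 0"
  by (simp add: lf_def)
lemma lf_nz: "lf a v \<noteq> 0 \<Longrightarrow> \<exists>j<r. v j \<noteq> 0"
  using lf_zero by blast

lemma ip_rat: "isrv u \<Longrightarrow> isrv v \<Longrightarrow> ip u v \<in> \<rat>"
  unfolding ip_def isrv_def by (intro Rats_sum Rats_mult) auto
lemma lf_rat: "isrv u \<Longrightarrow> isrv v \<Longrightarrow> lf u v \<in> \<rat>"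
  unfolding lf_def isrv_def by (intro Rats_sum Rats_mult) auto

lemma nm_sq: "(nm v)^2 = ip v v"
  by (simp add: nm_def ip_ge0)
lemma nm_ge0: "nm v \<ge> 0" by (simp add: nm_def ip_ge0)
lemma nm_pos: "(\<exists>j<r. v j \<noteq> 0) \<Longrightarrow> nm v > 0"
  by (simp add: nm_def ip_pos)

lemma expand: "ip (\<lambda>j. a * u j + b * v j) (\<lambda>j. a * u j + b * v j)
   = a^2 * ip u u + 2 * a * b * ip u v + b^2 * ip v v"
  by (simp add: ip_add1 ip_add2 ip_scale1 ip_scale2 ip_sym[of v u] power2_eq_square algebra_simps)

lemma CS: "ip u v \<le> nm u * nm v"
proof (cases "\<exists>j<r. v j \<noteq> 0")
  case False
  then have "ip u v = 0" by (simp add: ip_zero2)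
  then show ?thesis using nm_ge0 by simp
next
  case True
  then have pv: "ip v v > 0" by (rule ip_pos)
  define t where "t = ip u v / ip v v"
  have "0 \<le> ip (\<lambda>j. 1 * u j + (-t) * v j) (\<lambda>j. 1 * u j + (-t) * v j)" by (rule ip_ge0)
  also have "\<dots> = ip u u - 2 * t * ip u v + t^2 * ip v v" by (subst expand) simp
  also have "\<dots> = ip u u - (ip u v)^2 / ip v v" using pv
    by (simp add: t_def power2_eq_square field_simps)
  finally have "(ip u v)^2 \<le> ip u u * ip v v" using pv by (simp add: field_simps)
  then have "sqrt ((ip u v)^2) \<le> sqrt (ip u u * ip v v)" by (rule real_sqrt_le_mono)
  then show ?thesis by (simp add: nm_def real_sqrt_mult)
qed

lemma nm_scale: "c \<ge> 0 \<Longrightarrow> nm (\<lambda>j. c * v j) = c * nm v"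
  by (simp add: nm_def ip_scale1 ip_scale2 real_sqrt_mult mult.assoc[symmetric] power2_eq_square[symmetric])

lemma tri: "nm (\<lambda>j. u j + v j) \<le> nm u + nm v"
proof -
  have "ip (\<lambda>j. u j + v j) (\<lambda>j. u j + v j) = ip u u + 2 * ip u v + ip v v"
    using expand[of 1 u 1 v] by simp
  also have "\<dots> \<le> (nm u)^2 + 2 * (nm u * nm v) + (nm v)^2"
    using CS[of u v] by (simp add: nm_sq)
  also have "\<dots> = (nm u + nm v)^2" by (simp add: power2_eq_square algebra_simps)
  finally have "sqrt (ip (\<lambda>j. u j + v j) (\<lambda>j. u j + v j)) \<le> sqrt ((nm u + nm v)^2)"
    by (rule real_sqrt_le_mono)
  then show ?thesis using nm_ge0[of u] nm_ge0[of v] by (simp add: nm_def[of "\<lambda>j. u j + v j"])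
qed

lemma tri_conv: "0 \<le> t \<Longrightarrow> t \<le> 1 \<Longrightarrow> nm (\<lambda>j. (1 - t) * u j + t * v j) \<le> (1 - t) * nm u + t * nm v"
  using tri[of "\<lambda>j. (1 - t) * u j" "\<lambda>j. t * v j"] nm_scale[of "1 - t" u] nm_scale[of t v] by simp

end

context qf begin

definition W :: "(nat \<Rightarrow> real) set \<Rightarrow> (nat \<Rightarrow> real) set" where
  "W A = {v. (\<forall>j\<ge>r. v j = 0) \<and> (\<forall>a\<in>A. lf a v = 0)}"

lemma rep_full: "k \<le> r \<Longrightarrow> isrv c \<Longrightarrow> \<exists>u. isrv u \<and> (\<forall>j\<ge>k. u j = 0) \<and>
   (\<forall>w. (\<forall>j\<ge>k. w j = 0) \<longrightarrow> ip u w = lf c w)"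
proof (induction k arbitrary: c)
  case 0
  show ?case
    by (rule exI[of _ "\<lambda>_. 0"]) (auto simp: isrv_def ip_def lf_def)
next
  case (Suc k)
  then have kr: "k < r" by simp
  define d where "d = (\<lambda>i. real_of_int (B k i))"
  define e where "e = (\<lambda>j. if j = k then (1::real) else 0)"
  have "isrv d" by (simp add: isrv_def d_def)
  from Suc.IH[OF _ this] kr obtain q where q: "isrv q" "\<forall>j\<ge>k. q j = 0"
    "\<forall>w. (\<forall>j\<ge>k. w j = 0) \<longrightarrow> ip q w = lf d w" by auto
  from Suc.IH[OF _ Suc.prems(2)] kr obtain u0 where u0: "isrv u0" "\<forall>j\<ge>k. u0 j = 0"
    "\<forall>w. (\<forall>j\<ge>k. w j = 0) \<longrightarrow> ip u0 w = lf c w" by auto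
  have ipe: "ip e w = lf d w" for w
  proof -
    have "ip e w = (\<Sum>j<r. if j = k then (\<Sum>i<r. real_of_int (B k i) * w i) else 0)"
      unfolding ip_def e_def by (intro sum.cong) auto
    also have "\<dots> = lf d w" using kr by (simp add: lf_def d_def)
    finally show ?thesis .
  qed
  define b where "b = (\<lambda>j. e j - q j)"
  have bk: "b k = 1" using q(2) by (simp add: b_def e_def)
  have bsp: "\<forall>j\<ge>Suc k. b j = 0" using q(2) by (simp add: b_def e_def)
  have borth: "ip b w = 0" if "\<forall>j\<ge>k. w j = 0" for w
    using that q(3) by (simp add: b_def ip_diff1 ipe)
  have bpos: "ip b b > 0" using bk kr by (intro ip_pos) auto
  have brat: "isrv b" using q(1) by (auto simp: isrv_def b_def e_def)
  define t where "t = lf c b / ip b b"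
  define u where "u = (\<lambda>j. u0 j + t * b j)"
  show ?case
  proof (intro exI conjI allI impI)
    show "isrv u" using u0(1) brat Suc.prems(2)
      by (auto simp: u_def t_def isrv_def intro!: Rats_add Rats_mult Rats_divide lf_rat ip_rat)
    show "u j = 0" if "Suc k \<le> j" for j using that u0(2) bsp by (simp add: u_def)
    fix w :: "nat \<Rightarrow> real" assume w: "\<forall>j\<ge>Suc k. w j = 0"
    define w' where "w' = (\<lambda>j. w j - w k * b j)"
    have w'sp: "\<forall>j\<ge>k. w' j = 0"
    proof (intro allI impI)
      fix j assume "k \<le> j"
      then show "w' j = 0"
        by (cases "j = k") (use w bsp bk in \<open>auto simp: w'_def\<close>)
    qed
    have wdec: "w = (\<lambda>j. w' j + w k * b j)" by (simp add: w'_def)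
    have "ip u0 b = 0" using borth[OF u0(2)] by (simp add: ip_sym)
    then have "ip u0 w = lf c w'"
      using u0(3) w'sp by (subst wdec) (simp add: ip_add2 ip_scale2)
    moreover have "ip b w = w k * ip b b"
      using borth[OF w'sp] by (subst wdec) (simp add: ip_add2 ip_scale2)
    moreover have "lf c w = lf c w' + w k * lf c b"
      by (subst wdec) (simp add: lf_add lf_scale)
    ultimately show "ip u w = lf c w"
      using bpos unfolding u_def ip_add1 ip_scale1 by (simp add: t_def)
  qed
qed

lemma rep_W: "finite A \<Longrightarrow> \<forall>a\<in>A. isrv a \<Longrightarrow> isrv c \<Longrightarrow>
   \<exists>u. isrv u \<and> u \<in> W A \<and> (\<forall>w\<in>W A. ip u w = lf c w)"
proof (induction A arbitrary: c rule: finite_induct)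
  case empty
  then show ?case using rep_full[of r c] by (auto simp: W_def)
next
  case (insert a A)
  from insert.IH[of a] insert.prems obtain ua where ua: "isrv ua" "ua \<in> W A"
    "\<forall>w\<in>W A. ip ua w = lf a w" by auto
  from insert.IH[of c] insert.prems obtain uc where uc: "isrv uc" "uc \<in> W A"
    "\<forall>w\<in>W A. ip uc w = lf c w" by auto
  have WI: "W (insert a A) = {w \<in> W A. lf a w = 0}" by (auto simp: W_def)
  show ?case
  proof (cases "\<exists>j<r. ua j \<noteq> 0")
    case False
    then have "\<forall>w\<in>W A. lf a w = 0" using ua(3) by (simp add: ip_zero1)
    then have "W (insert a A) = W A" using WI by auto
    then show ?thesis using uc by auto
  next
    case True
    then have pa: "ip ua ua > 0" by (rule ip_pos)
    define t where "t = ip uc ua / ip ua ua"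
    define u where "u = (\<lambda>j. uc j - t * ua j)"
    have uW: "u \<in> W A" using ua(2) uc(2) by (auto simp: W_def u_def lf_diff lf_scale)
    have "lf a u = ip ua u" using ua(3) uW by simp
    also have "\<dots> = 0"
      using pa unfolding u_def ip_diff2 ip_scale2 by (simp add: t_def ip_sym[of ua uc])
    finally have "lf a u = 0" .
    then have "u \<in> W (insert a A)" using WI uW by auto
    moreover have "isrv u" using ua(1) uc(1)
      by (auto simp: u_def t_def isrv_def intro!: Rats_diff Rats_mult Rats_divide ip_rat)
    moreover have "\<forall>w\<in>W (insert a A). ip u w = lf c w"
      using WI ua(3) uc(3) by (simp add: u_def ip_diff1 ip_scale1)
    ultimately show ?thesis by blast
  qed
qed

end

context qf begin

definition K :: "(nat \<Rightarrow> real) set \<Rightarrow> (nat \<Rightarrow> real) set" where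
  "K S = {v. (\<forall>j\<ge>r. v j = 0) \<and> (\<forall>a\<in>S. lf a v \<ge> 0)}"
definition fr :: "(nat \<Rightarrow> real) \<Rightarrow> (nat \<Rightarrow> real) \<Rightarrow> real" where
  "fr chi v = lf chi v / nm v"
definition pA :: "(nat \<Rightarrow> real) \<Rightarrow> (nat \<Rightarrow> real) set \<Rightarrow> nat \<Rightarrow> real" where
  "pA chi A = (\<lambda>j. - (SOME u. isrv u \<and> u \<in> W A \<and> (\<forall>w\<in>W A. ip u w = lf chi w)) j)"

lemma pA_props:
  assumes "finite A" "\<forall>a\<in>A. isrv a" "isrv chi"
  shows "isrv (pA chi A) \<and> pA chi A \<in> W A \<and> (\<forall>w\<in>W A. lf chi w = - ip (pA chi A) w)"
proof -
  let ?P = "\<lambda>u. isrv u \<and> u \<in> W A \<and> (\<forall>w\<in>W A. ip u w = lf chi w)"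
  have "\<exists>u. ?P u" using rep_W[OF assms] .
  then have P: "?P (SOME u. ?P u)" by (rule someI_ex)
  define u where "u = (SOME u. ?P u)"
  have pe: "pA chi A = (\<lambda>j. - u j)" by (simp add: pA_def u_def)
  show ?thesis using P unfolding pe u_def[symmetric]
    by (auto simp: isrv_def W_def lf_minus ip_minus1)
qed

lemma fr_scale: "c > 0 \<Longrightarrow> fr chi (\<lambda>j. c * v j) = fr chi v"
  by (simp add: fr_def lf_scale nm_scale)

lemma K_scale: "c > 0 \<Longrightarrow> v \<in> K S \<Longrightarrow> (\<lambda>j. c * v j) \<in> K S"
  by (auto simp: K_def lf_scale)

lemma descent:
  assumes fin: "finite S" and Srat: "\<forall>a\<in>S. isrv a" and crat: "isrv chi"
  shows "v \<in> K S \<Longrightarrow> lf chi v < 0 \<Longrightarrow>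
    \<exists>A\<subseteq>S. pA chi A \<in> K S \<and> lf chi (pA chi A) < 0 \<and> fr chi (pA chi A) \<le> fr chi v"
proof (induction "card {a\<in>S. lf a v > 0}" arbitrary: v rule: less_induct)
  case less
  define A where "A = {a\<in>S. lf a v = 0}"
  have AS: "A \<subseteq> S" by (auto simp: A_def)
  have finA: "finite A" using fin AS finite_subset by blast
  have Arat: "\<forall>a\<in>A. isrv a" using Srat AS by blast
  define p where "p = pA chi A"
  from pA_props[OF finA Arat crat] have pW: "p \<in> W A" and
    plf: "\<forall>w\<in>W A. lf chi w = - ip p w" by (auto simp: p_def)
  have vW: "v \<in> W A" using less.prems(1) by (auto simp: W_def K_def A_def)
  have nv: "nm v > 0" using lf_nz less.prems(2) nm_pos by (metis less_irrefl)
  have lv: "lf chi v \<ge> - (nm p * nm v)" using plf vW CS[of p v] by simp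
  have np: "nm p > 0"
  proof -
    have "nm p \<noteq> 0" using lv less.prems(2) by auto
    then show ?thesis using nm_ge0[of p] by linarith
  qed
  have lp: "lf chi p = - ((nm p)^2)" using plf pW by (simp add: nm_sq)
  have frp: "fr chi p = - nm p" using np by (simp add: fr_def lp power2_eq_square)
  have "- nm p \<le> fr chi v"
    using lv nv by (simp add: fr_def field_simps)
  then have frpv: "fr chi p \<le> fr chi v" by (simp add: frp)
  have lpneg: "lf chi p < 0" using lp np by simp
  show ?case
  proof (cases "p \<in> K S")
    case True
    then show ?thesis using AS lpneg frpv by (auto simp: p_def)
  next
    case False
    define T where "T = {a\<in>S. lf a p < 0}"
    have psp: "\<forall>j\<ge>r. p j = 0" using pW by (simp add: W_def)
    have Tne: "T \<noteq> {}" using False psp by (auto simp: K_def T_def)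
    have finT: "finite T" using fin by (simp add: T_def)
    have vpos: "lf a v > 0" if "a \<in> T" for a
    proof -
      have "lf a v \<ge> 0" using that less.prems(1) by (auto simp: K_def T_def)
      moreover have "lf a v \<noteq> 0"
      proof
        assume "lf a v = 0"
        then have "a \<in> A" using that by (auto simp: A_def T_def)
        then have "lf a p = 0" using pW by (auto simp: W_def)
        then show False using that by (auto simp: T_def)
      qed
      ultimately show ?thesis by simp
    qed
    define tf where "tf a = lf a v / (lf a v - lf a p)" for a
    define t where "t = Min (tf ` T)"
    have "t \<in> tf ` T" unfolding t_def using finT Tne by (intro Min_in) auto
    then obtain a0 where a0: "a0 \<in> T" "t = tf a0" by auto
    have tle: "t \<le> tf a" if "a \<in> T" for a unfolding t_def using finT that by (intro Min_le) auto
    have a0p: "lf a0 p < 0" using a0 by (simp add: T_def)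
    have a0v: "lf a0 v > 0" using vpos a0 by simp
    have t0: "0 < t" "t < 1" using a0p a0v by (auto simp: a0 tf_def field_simps)
    define v' where "v' = (\<lambda>j. (1 - t) * v j + t * p j)"
    have lfv': "lf a v' = (1 - t) * lf a v + t * lf a p" for a
      by (simp add: v'_def lf_add lf_scale)
    have v'K: "v' \<in> K S"
    proof -
      have "lf a v' \<ge> 0" if aS: "a \<in> S" for a
      proof (cases "lf a p < 0")
        case True
        then have aT: "a \<in> T" using aS by (simp add: T_def)
        have "t \<le> lf a v / (lf a v - lf a p)" using tle[OF aT] by (simp add: tf_def)
        then have "t * (lf a v - lf a p) \<le> lf a v" using True vpos[OF aT]
          by (simp add: field_simps)
        then show ?thesis by (simp add: lfv' algebra_simps)
      next
        case False
        have "lf a v \<ge> 0" using aS less.prems(1) by (simp add: K_def)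
        then show ?thesis using False t0 by (simp add: lfv')
      qed
      moreover have "\<forall>j\<ge>r. v' j = 0" using psp less.prems(1) by (simp add: v'_def K_def)
      ultimately show ?thesis by (simp add: K_def)
    qed
    have a0v': "lf a0 v' = 0"
      using a0p a0v by (simp add: lfv' a0 tf_def field_simps)
    have sub: "{a\<in>S. lf a v' > 0} \<subset> {a\<in>S. lf a v > 0}"
    proof -
      have "{a\<in>S. lf a v' > 0} \<subseteq> {a\<in>S. lf a v > 0} - {a0}"
      proof safe
        fix a assume aS: "a \<in> S" and pos: "lf a v' > 0"
        show "lf a v > 0"
        proof (rule ccontr)
          assume "\<not> lf a v > 0"
          moreover have "lf a v \<ge> 0" using aS less.prems(1) by (simp add: K_def)
          ultimately have "lf a v = 0" by linarith
          then have "a \<in> A" using aS by (simp add: A_def)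
          then have "lf a p = 0" using pW by (simp add: W_def)
          then show False using pos \<open>lf a v = 0\<close> by (simp add: lfv')
        qed
      next
        assume "lf a0 v' > 0" then show False using a0v' by simp
      qed
      moreover have "a0 \<in> {a\<in>S. lf a v > 0}" using a0 a0v by (simp add: T_def)
      ultimately show ?thesis by blast
    qed
    have card_lt: "card {a\<in>S. lf a v' > 0} < card {a\<in>S. lf a v > 0}"
      using fin sub by (intro psubset_card_mono) auto
    have lcv': "lf chi v' < 0"
      using less.prems(2) lpneg t0 unfolding v'_def lf_add lf_scale
      by (smt (verit) mult_pos_neg)
    have nv': "nm v' > 0" using lf_nz lcv' nm_pos by (metis less_irrefl)
    define \<mu> where "\<mu> = fr chi v"
    have mneg: "\<mu> < 0" using less.prems(2) nv by (simp add: \<mu>_def fr_def divide_neg_pos)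
    have lcv: "lf chi v = \<mu> * nm v" using nv by (simp add: \<mu>_def fr_def)
    have "lf chi p / nm p \<le> \<mu>" using frpv by (simp add: \<mu>_def fr_def)
    then have lcp: "lf chi p \<le> \<mu> * nm p" using np by (simp add: pos_divide_le_eq mult.commute)
    have "lf chi v' = (1 - t) * lf chi v + t * lf chi p" by (rule lfv')
    also have "\<dots> \<le> \<mu> * ((1 - t) * nm v + t * nm p)"
      using lcv lcp t0 by (simp add: algebra_simps mult_left_mono)
    also have "\<dots> \<le> \<mu> * nm v'"
      using tri_conv[of t v p] t0 mneg unfolding v'_def
      by (intro mult_left_mono_neg) auto
    finally have "fr chi v' \<le> \<mu>" using nv' by (simp add: fr_def field_simps)
    with less.hyps[OF card_lt v'K lcv'] show ?thesis by (auto simp: \<mu>_def)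
  qed
qed

end


lemma common_denom:
  fixes p :: "nat \<Rightarrow> real" and k :: nat
  shows "(\<forall>j. p j \<in> \<rat>) \<Longrightarrow> \<exists>N::int. N > 0 \<and> (\<forall>j<k. real_of_int N * p j \<in> \<int>)"
proof (induction k)
  case 0 then show ?case by (intro exI[of _ 1]) auto
next
  case (Suc k)
  then obtain N :: int where N: "N > 0" "\<forall>j<k. real_of_int N * p j \<in> \<int>" by auto
  from Suc.prems have "p k \<in> \<rat>" by auto
  then obtain a b :: int where ab: "b > 0" "p k = of_int a / of_int b" by (auto elim: Rats_cases')
  show ?case
  proof (intro exI[of _ "N * b"] conjI allI impI)
    show "N * b > 0" using N ab by simp
    fix j assume "j < Suc k"
    then consider "j < k" | "j = k" by linarith
    then show "real_of_int (N * b) * p j \<in> \<int>"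
    proof cases
      case 1
      have "real_of_int (N * b) * p j = of_int b * (of_int N * p j)" by simp
      also have "\<dots> \<in> \<int>" by (rule Ints_mult[OF Ints_of_int]) (use N(2) 1 in auto)
      finally show ?thesis .
    next
      case 2
      have "real_of_int (N * b) * p j = of_int N * (of_int b * p k)" using 2 by simp
      also have "of_int b * p k = of_int a" using ab by simp
      finally have "real_of_int (N * b) * p j = of_int (N * a)" by simp
      then show ?thesis by (metis Ints_of_int)
    qed
  qed
qed

lemma indiv_dvd:
  assumes "indivisible r l" "(d::int) > 0" "\<forall>k. d dvd l k"
  shows "d = 1"
proof (rule ccontr)
  assume "d \<noteq> 1"
  then have d2: "d \<ge> 2" using assms(2) by simp
  define m where "m = (\<lambda>k. l k div d)"
  have "l = (\<lambda>j. d * m j)" using assms(3) by (auto simp: m_def)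
  moreover have "m \<in> Gam r" using assms(1) by (auto simp: indivisible_def Gam_def m_def)
  ultimately show False using assms(1) d2 by (auto simp: indivisible_def)
qed

lemma indiv_par_int:
  assumes i1: "indivisible r l1" and i2: "indivisible r l2"
    and ab: "(a::int) > 0" "(b::int) > 0" and eq: "\<forall>k. a * l1 k = b * l2 k"
  shows "l1 = l2"
proof -
  define g where "g = gcd a b"
  have g0: "g > 0" using ab by (simp add: g_def)
  define a' where "a' = a div g"
  define b' where "b' = b div g"
  have aa: "a = g * a'" and bb: "b = g * b'" by (simp_all add: a'_def b'_def g_def)
  have cop: "coprime a' b'" using ab by (simp add: a'_def b'_def g_def div_gcd_coprime)
  have a'0: "a' > 0" using ab g0 aa by (simp add: zero_less_mult_iff)
  have b'0: "b' > 0" using ab g0 bb by (simp add: zero_less_mult_iff)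
  have eq': "a' * l1 k = b' * l2 k" for k using eq g0 aa bb by (simp add: mult.assoc)
  have "b' dvd l1 k" for k
  proof -
    have "b' dvd a' * l1 k" using eq' by simp
    then show ?thesis using cop by (simp add: coprime_dvd_mult_left_iff coprime_commute coprime_dvd_mult_right_iff)
  qed
  then have "b' = 1" using indiv_dvd[OF i1 b'0] by auto
  have "a' dvd l2 k" for k
  proof -
    have "a' dvd b' * l2 k" using eq'[of k, symmetric] by simp
    then show ?thesis using cop by (simp add: coprime_dvd_mult_left_iff coprime_dvd_mult_right_iff)
  qed
  then have "a' = 1" using indiv_dvd[OF i2 a'0] by auto
  show ?thesis using eq' \<open>a' = 1\<close> \<open>b' = 1\<close> by auto
qed

lemma indiv_par_real:
  assumes i1: "indivisible r l1" and i2: "indivisible r l2"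
    and c: "(c1::real) > 0" "(c2::real) > 0"
    and eq: "\<forall>k. c1 * of_int (l1 k) = c2 * of_int (l2 k)"
  shows "l1 = l2"
proof -
  have "\<exists>j. l1 j \<noteq> 0"
  proof (rule ccontr)
    assume "\<not> (\<exists>j. l1 j \<noteq> 0)"
    then have "l1 = (\<lambda>_. 0)" by auto
    then show False using i1 by (simp add: indivisible_def)
  qed
  then obtain j0 where j0: "l1 j0 \<noteq> 0" by auto
  define a where "a = l2 j0"
  define b where "b = l1 j0"
  have cab: "c1 * of_int b = c2 * of_int a" using eq by (simp add: a_def b_def)
  have key: "a * l1 k = b * l2 k" for k
  proof -
    have "c1 * (of_int (l1 k) * of_int a) * c2 = c2 * of_int (l2 k) * (c2 * of_int a)"
      using eq by (simp add: algebra_simps)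
    also have "\<dots> = c2 * of_int (l2 k) * (c1 * of_int b)" using cab by simp
    finally have "c1 * c2 * (of_int (a * l1 k)) = c1 * c2 * of_int (b * l2 k)"
      by (simp add: algebra_simps)
    then have "real_of_int (a * l1 k) = of_int (b * l2 k)" using c by simp
    then show ?thesis by (simp only: of_int_eq_iff)
  qed
  have b0: "b \<noteq> 0" using j0 by (simp add: b_def)
  show ?thesis
  proof (cases "b > 0")
    case True
    then have "c2 * of_int a > 0" using cab c by (metis mult_pos_pos of_int_0_less_iff)
    then have "a > 0" using c by (simp add: zero_less_mult_iff)
    then show ?thesis using indiv_par_int[OF i1 i2 _ True] key by blast
  next
    case False
    then have bn: "b < 0" using b0 by simp
    then have "c1 * of_int b < 0" using c by (simp add: mult_pos_neg)
    then have "c2 * of_int a < 0" using cab by simp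
    then have "a < 0" using c by (simp add: mult_less_0_iff)
    then show ?thesis using indiv_par_int[OF i1 i2, of "-a" "-b"] bn key by simp
  qed
qed

definition iv :: "(nat \<Rightarrow> int) \<Rightarrow> nat \<Rightarrow> real" where "iv m = (\<lambda>j. real_of_int (m j))"

context qf begin

lemma kempf_real:
  assumes fin: "finite S" and Srat: "\<forall>a\<in>S. isrv a" and crat: "isrv chi"
    and v0: "v0 \<in> K S" "lf chi v0 < 0"
  shows "\<exists>p. isrv p \<and> p \<in> K S \<and> lf chi p < 0 \<and> (\<forall>v\<in>K S. (\<exists>j<r. v j \<noteq> 0) \<longrightarrow> fr chi p \<le> fr chi v)"
proof -
  define C where "C = {A. A \<subseteq> S \<and> pA chi A \<in> K S \<and> lf chi (pA chi A) < 0}"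
  have finC: "finite C" using fin by (auto simp: C_def intro: finite_subset[of _ "Pow S"])
  have Cne: "C \<noteq> {}" using descent[OF fin Srat crat v0] by (auto simp: C_def)
  define g where "g A = fr chi (pA chi A)" for A
  have "Min (g ` C) \<in> g ` C" using finC Cne by (intro Min_in) auto
  then obtain As where As: "As \<in> C" "g As = Min (g ` C)" by auto
  have gle: "g As \<le> g A" if "A \<in> C" for A using As finC that by simp
  define p where "p = pA chi As"
  have finAs: "finite As" using As fin by (auto simp: C_def intro: finite_subset)
  have "isrv p" using pA_props[OF finAs _ crat] Srat As by (auto simp: p_def C_def)
  moreover have pK: "p \<in> K S" and pneg: "lf chi p < 0" using As by (auto simp: C_def p_def)
  moreover have "fr chi p \<le> fr chi v" if vK: "v \<in> K S" and vnz: "\<exists>j<r. v j \<noteq> 0" for v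
  proof (cases "lf chi v < 0")
    case True
    from descent[OF fin Srat crat vK True] obtain A where
      "A \<subseteq> S" "pA chi A \<in> K S" "lf chi (pA chi A) < 0" "fr chi (pA chi A) \<le> fr chi v" by auto
    then have "A \<in> C" "g A \<le> fr chi v" by (auto simp: C_def g_def)
    then show ?thesis using gle by (fastforce simp: g_def p_def)
  next
    case False
    have "nm v > 0" using nm_pos vnz by simp
    then have "fr chi v \<ge> 0" using False by (simp add: fr_def)
    moreover have "nm p > 0" using nm_pos lf_nz pneg by (metis less_irrefl)
    then have "fr chi p < 0" using pneg by (simp add: fr_def divide_neg_pos)
    ultimately show ?thesis by simp
  qed
  ultimately show ?thesis by blast
qed

lemma iv_nz: "m \<in> Gam r \<Longrightarrow> m \<noteq> (\<lambda>_. 0) \<Longrightarrow> \<exists>j<r. iv m j \<noteq> 0"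
  by (auto simp: Gam_def iv_def) (metis not_le)

lemma kempf_int:
  assumes fin: "finite S" and Srat: "\<forall>a\<in>S. isrv a" and crat: "isrv chi"
    and v0: "v0 \<in> K S" "lf chi v0 < 0"
  shows "\<exists>l. indivisible r l \<and> iv l \<in> K S \<and>
     (\<forall>m\<in>Gam r. m \<noteq> (\<lambda>_. 0) \<and> iv m \<in> K S \<longrightarrow> fr chi (iv l) \<le> fr chi (iv m))"
proof -
  obtain p where p: "isrv p" "p \<in> K S" "lf chi p < 0"
    "\<forall>v\<in>K S. (\<exists>j<r. v j \<noteq> 0) \<longrightarrow> fr chi p \<le> fr chi v"
    using kempf_real[OF assms] by blast
  obtain j0 where j0: "j0 < r" "p j0 \<noteq> 0" using lf_nz p(3) by (metis less_irrefl)
  have psp: "\<forall>j\<ge>r. p j = 0" using p(2) by (simp add: K_def)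
  obtain N :: int where N: "N > 0" "\<forall>j<r. real_of_int N * p j \<in> \<int>"
    using common_denom[of p r] p(1) by (auto simp: isrv_def)
  define mi where "mi j = \<lfloor>real_of_int N * p j\<rfloor>" for j
  have mi_eq: "real_of_int (mi j) = real_of_int N * p j" for j
  proof (cases "j < r")
    case True
    then obtain z where "real_of_int N * p j = of_int z" using N(2) by (auto elim: Ints_cases)
    then show ?thesis by (simp add: mi_def)
  next
    case False then show ?thesis using psp by (simp add: mi_def)
  qed
  define g where "g = Gcd (mi ` {..<r})"
  have gdvd: "g dvd mi j" for j
  proof (cases "j < r")
    case True then show ?thesis by (simp add: g_def Gcd_dvd)
  next
    case False then have "mi j = 0" using psp by (simp add: mi_def)
    then show ?thesis by simp
  qed
  have mij0: "mi j0 \<noteq> 0" using mi_eq[of j0] j0 N by auto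
  have "g \<noteq> 0" using mij0 j0 by (auto simp: g_def)
  moreover have "g \<ge> 0" by (simp add: g_def)
  ultimately have g0: "g > 0" by simp
  define l where "l j = mi j div g" for j
  have mil: "mi j = g * l j" for j using gdvd by (simp add: l_def)
  have ivl: "iv l = (\<lambda>j. (real_of_int N / real_of_int g) * p j)"
  proof
    fix j
    have "real_of_int (mi j) = of_int g * of_int (l j)" using mil by (metis of_int_mult)
    then show "iv l j = (real_of_int N / real_of_int g) * p j"
      using g0 mi_eq[of j] by (simp add: iv_def field_simps)
  qed
  have cpos: "real_of_int N / real_of_int g > 0" using N g0 by simp
  have lGam: "l \<in> Gam r" using psp by (simp add: Gam_def l_def mi_def)
  have lnz: "l \<noteq> (\<lambda>_. 0)"
  proof
    assume "l = (\<lambda>_. 0)" then have "mi j0 = 0" using mil by simp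
    then show False using mij0 by simp
  qed
  have indiv: "indivisible r l"
    unfolding indivisible_def
  proof (intro conjI lGam lnz notI)
    assume "\<exists>k::int. k \<ge> 2 \<and> (\<exists>m\<in>Gam r. l = (\<lambda>j. k * m j))"
    then obtain k m where k: "k \<ge> 2" "l = (\<lambda>j. k * m j)" by auto
    have "g * k dvd mi j" if "j \<in> {..<r}" for j using mil k(2) by simp
    then have "g * k dvd g" unfolding g_def by (intro Gcd_greatest) auto
    then have "g * k dvd g * 1" by simp
    then have "k dvd 1" using g0 by (simp only: dvd_mult_cancel_left) simp
    then show False using k(1) by (simp add: zdvd1_eq) 
  qed
  show ?thesis
  proof (intro exI conjI ballI impI)
    show "indivisible r l" by (rule indiv)
    show "iv l \<in> K S" unfolding ivl using K_scale[OF cpos p(2)] .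
    fix m assume "m \<in> Gam r" "m \<noteq> (\<lambda>_. 0) \<and> iv m \<in> K S"
    moreover have "iv m \<in> K S" using calculation by simp
    ultimately have "fr chi p \<le> fr chi (iv m)" using p(4) iv_nz by blast
    then show "fr chi (iv l) \<le> fr chi (iv m)" unfolding ivl fr_scale[OF cpos] .
  qed
qed

end

context qf begin

lemma K_add: "u \<in> K S \<Longrightarrow> v \<in> K S \<Longrightarrow> (\<lambda>j. u j + v j) \<in> K S"
  by (auto simp: K_def lf_add)

lemma kempf_uniq:
  assumes m0: "m0 \<in> Gam r" "iv m0 \<in> K S" "lf chi (iv m0) < 0"
    and i1: "indivisible r l1" and k1: "iv l1 \<in> K S"
    and min1: "\<forall>m\<in>Gam r. m \<noteq> (\<lambda>_. 0) \<and> iv m \<in> K S \<longrightarrow> fr chi (iv l1) \<le> fr chi (iv m)"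
    and i2: "indivisible r l2" and k2: "iv l2 \<in> K S"
    and min2: "\<forall>m\<in>Gam r. m \<noteq> (\<lambda>_. 0) \<and> iv m \<in> K S \<longrightarrow> fr chi (iv l2) \<le> fr chi (iv m)"
  shows "l1 = l2"
proof -
  define u1 where "u1 = iv l1"
  define u2 where "u2 = iv l2"
  have g1: "l1 \<in> Gam r" "l1 \<noteq> (\<lambda>_. 0)" and g2: "l2 \<in> Gam r" "l2 \<noteq> (\<lambda>_. 0)"
    using i1 i2 by (auto simp: indivisible_def)
  have n1: "nm u1 > 0" using iv_nz[OF g1] nm_pos by (simp add: u1_def)
  have n2: "nm u2 > 0" using iv_nz[OF g2] nm_pos by (simp add: u2_def)
  have m0nz: "m0 \<noteq> (\<lambda>_. 0)"
  proof
    assume "m0 = (\<lambda>_. 0)" then have "lf chi (iv m0) = 0" by (simp add: lf_def iv_def)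
    then show False using m0(3) by simp
  qed
  have nm0: "nm (iv m0) > 0" using iv_nz[OF m0(1) m0nz] nm_pos by simp
  have "fr chi (iv m0) < 0" using m0(3) nm0 by (simp add: fr_def divide_neg_pos)
  then have f1neg: "fr chi u1 < 0" using min1 m0 m0nz unfolding u1_def by fastforce
  have f12: "fr chi u1 \<le> fr chi u2" using min1 g2 k2 by (simp add: u1_def u2_def)
  have f21: "fr chi u2 \<le> fr chi u1" using min2 g1 k1 by (simp add: u1_def u2_def)
  define \<mu> where "\<mu> = fr chi u1"
  have l1e: "lf chi u1 = \<mu> * nm u1" using n1 by (simp add: \<mu>_def fr_def)
  have "fr chi u2 = \<mu>" using f12 f21 by (simp add: \<mu>_def)
  then have l2e: "lf chi u2 = \<mu> * nm u2" using n2 unfolding fr_def by (simp add: field_simps)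
  define s where "s = (\<lambda>j. l1 j + l2 j)"
  have ivs: "iv s = (\<lambda>j. u1 j + u2 j)" by (simp add: s_def iv_def u1_def u2_def)
  have sG: "s \<in> Gam r" using g1 g2 by (simp add: Gam_def s_def)
  have sK: "iv s \<in> K S" unfolding ivs u1_def u2_def by (rule K_add[OF k1 k2])
  have ls: "lf chi (iv s) = \<mu> * (nm u1 + nm u2)" by (simp add: ivs lf_add l1e l2e algebra_simps)
  have lsneg: "lf chi (iv s) < 0" using ls f1neg n1 n2 \<mu>_def by (simp add: mult_neg_pos)
  have snz: "s \<noteq> (\<lambda>_. 0)"
  proof
    assume "s = (\<lambda>_. 0)" then have "lf chi (iv s) = 0" by (simp add: lf_def iv_def)
    then show False using lsneg by simp
  qed
  have ns: "nm (iv s) > 0" using iv_nz[OF sG snz] nm_pos by simp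
  have "\<mu> \<le> fr chi (iv s)" using min1 sG snz sK by (simp add: \<mu>_def u1_def)
  then have "\<mu> * nm (iv s) \<le> \<mu> * (nm u1 + nm u2)" using ns by (simp add: fr_def ls field_simps)
  then have ge: "nm u1 + nm u2 \<le> nm (iv s)" using f1neg \<mu>_def by (simp add: mult_le_cancel_left)
  have le: "nm (iv s) \<le> nm u1 + nm u2" unfolding ivs by (rule tri)
  have "ip (iv s) (iv s) = (nm u1 + nm u2)^2" using ge le nm_sq[of "iv s"] by simp
  moreover have "ip (iv s) (iv s) = ip u1 u1 + 2 * ip u1 u2 + ip u2 u2"
    unfolding ivs using expand[of 1 u1 1 u2] by simp
  ultimately have ip12: "ip u1 u2 = nm u1 * nm u2"
    by (simp add: nm_sq[symmetric] power2_eq_square algebra_simps)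
  have "ip (\<lambda>j. nm u2 * u1 j + (- nm u1) * u2 j) (\<lambda>j. nm u2 * u1 j + (- nm u1) * u2 j) = 0"
    by (subst expand) (simp add: ip12 nm_sq[symmetric] power2_eq_square)
  then have z: "\<forall>j<r. nm u2 * u1 j + (- nm u1) * u2 j = 0" by (rule ip_eq0)
  have "\<forall>k. nm u2 * of_int (l1 k) = nm u1 * of_int (l2 k)"
  proof
    fix k show "nm u2 * of_int (l1 k) = nm u1 * of_int (l2 k)"
    proof (cases "k < r")
      case True then show ?thesis using z by (simp add: u1_def u2_def iv_def)
    next
      case False then show ?thesis using g1 g2 by (simp add: Gam_def)
    qed
  qed
  then show ?thesis using indiv_par_real[OF i1 i2 n2 n1] by blast
qed

end

definition PHI where
  "PHI n r B chis chi x l \<longleftrightarrow> indivisible r l \<and> x \<in> Xl n r chis l \<and>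
     (\<forall>m\<in>Gam r. m \<noteq> (\<lambda>_. 0) \<and> x \<in> Xl n r chis m \<longrightarrow>
        real_of_int (pair r chi l) / nrm r B l \<le> real_of_int (pair r chi m) / nrm r B m)"

lemma lam_PHI: "lam_chi n r B chis chi x = (THE l. PHI n r B chis chi x l)"
  by (simp add: lam_chi_def PHI_def)

context qf begin

lemma pair_lf: "real_of_int (pair r a m) = lf (iv a) (iv m)"
  by (simp add: pair_def lf_def iv_def)
lemma nrm_nm: "nrm r B m = nm (iv m)"
  by (simp add: nrm_def nm_def ip_def iv_def)
lemma fr_iv: "fr (iv chi) (iv m) = real_of_int (pair r chi m) / nrm r B m"
  by (simp add: fr_def pair_lf nrm_nm)

definition Sx where "Sx n chis x = (\<lambda>i. iv (chis i)) ` {i\<in>{1..n}. x i \<noteq> 0}"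

lemma Xl_K: assumes "m \<in> Gam r" shows "x \<in> Xl n r chis m \<longleftrightarrow> iv m \<in> K (Sx n chis x)"
proof -
  have sp: "\<forall>j\<ge>r. iv m j = 0" using assms by (simp add: Gam_def iv_def)
  have "x \<in> Xl n r chis m \<longleftrightarrow> (\<forall>i\<in>{1..n}. x i \<noteq> 0 \<longrightarrow> lf (iv (chis i)) (iv m) \<ge> 0)"
    unfolding Xl_def pair_lf[symmetric] by auto
  also have "\<dots> \<longleftrightarrow> (\<forall>a\<in>Sx n chis x. lf a (iv m) \<ge> 0)" by (auto simp: Sx_def)
  also have "\<dots> \<longleftrightarrow> iv m \<in> K (Sx n chis x)" using sp by (simp add: K_def)
  finally show ?thesis .
qed

lemma kempf_main:
  assumes "unstable n r chis chi x"
  shows "\<exists>!l. PHI n r B chis chi x l"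
proof -
  from assms obtain m0 where m0: "m0 \<in> Gam r" "x \<in> Xl n r chis m0" "pair r chi m0 < 0"
    by (auto simp: unstable_def)
  let ?S = "Sx n chis x"
  have fin: "finite ?S" by (simp add: Sx_def)
  have Srat: "\<forall>a\<in>?S. isrv a" by (auto simp: Sx_def isrv_def iv_def)
  have crat: "isrv (iv chi)" by (auto simp: isrv_def iv_def)
  have v0: "iv m0 \<in> K ?S" "lf (iv chi) (iv m0) < 0"
    using m0 Xl_K pair_lf[of chi m0] by auto
  have P_iff: "PHI n r B chis chi x l \<longleftrightarrow> indivisible r l \<and> iv l \<in> K ?S \<and>
     (\<forall>m\<in>Gam r. m \<noteq> (\<lambda>_. 0) \<and> iv m \<in> K ?S \<longrightarrow> fr (iv chi) (iv l) \<le> fr (iv chi) (iv m))" for l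
  proof -
    have "indivisible r l \<Longrightarrow> l \<in> Gam r" by (simp add: indivisible_def)
    then show ?thesis unfolding PHI_def fr_iv using Xl_K by auto
  qed
  show ?thesis
  proof (rule ex_ex1I)
    show "\<exists>l. PHI n r B chis chi x l"
      using kempf_int[OF fin Srat crat v0] P_iff by blast
  next
    fix l1 l2 assume "PHI n r B chis chi x l1" "PHI n r B chis chi x l2"
    then show "l1 = l2" unfolding P_iff using kempf_uniq[OF m0(1) v0] by blast
  qed
qed

end

theorem lemma3p15:
  fixes n r :: nat and B chis :: "nat \<Rightarrow> nat \<Rightarrow> int" and chi l :: "nat \<Rightarrow> int"
  assumes symB: "\<And>j k. B j k = B k j"
    and posB: "\<And>v::nat \<Rightarrow> real. (\<exists>j<r. v j \<noteq> 0) \<Longrightarrow>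
                 (\<Sum>j<r. \<Sum>k<r. real_of_int (B j k) * v j * v k) > 0"
    and lam: "l \<in> LamChi n r B chis chi"
  shows "(\<exists>!M. M \<subseteq> {1..n} \<and> Lset n M \<subseteq> S_chi n r B chis chi l \<and>
            (\<forall>M'. M' \<subseteq> {1..n} \<and> Lset n M' \<subseteq> S_chi n r B chis chi l \<and> M \<subseteq> M' \<longrightarrow> M' = M))
       \<and> (let M = {i\<in>{1..n}. pair r (chis i) l \<ge> 0} in
            Lset n M \<subseteq> S_chi n r B chis chi l \<and>
            (\<forall>M'. M' \<subseteq> {1..n} \<and> Lset n M' \<subseteq> S_chi n r B chis chi l \<and> M \<subseteq> M' \<longrightarrow> M' = M) \<and>
            Vset ({1..n} - M) = Xl n r chis l)"
proof -
  interpret qf r B using symB posB by unfold_locales auto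
  have lamP: "PHI n r B chis chi x (lam_chi n r B chis chi x)" if "unstable n r chis chi x" for x
    unfolding lam_PHI using kempf_main[OF that] by (rule theI')
  have lamEq: "lam_chi n r B chis chi x = l'" if "unstable n r chis chi x" "PHI n r B chis chi x l'" for x l'
    unfolding lam_PHI using kempf_main[OF that(1)] that(2) by (metis the1_equality)
  from lam obtain x0 where x0: "unstable n r chis chi x0" "l = lam_chi n r B chis chi x0"
    by (auto simp: LamChi_def)
  have P0: "PHI n r B chis chi x0 l" using lamP[OF x0(1)] x0(2) by simp
  from x0(1) obtain m0 where m0: "m0 \<in> Gam r" "x0 \<in> Xl n r chis m0" "pair r chi m0 < 0"
    by (auto simp: unstable_def)
  have m0nz: "m0 \<noteq> (\<lambda>_. 0)"
  proof
    assume "m0 = (\<lambda>_. 0)" then show False using m0(3) by (simp add: pair_def)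
  qed
  have lG: "l \<in> Gam r" using P0 by (simp add: PHI_def indivisible_def)
  have x0l: "x0 \<in> Xl n r chis l" using P0 by (simp add: PHI_def)
  have "real_of_int (pair r chi l) / nrm r B l \<le> real_of_int (pair r chi m0) / nrm r B m0"
    using P0 m0 m0nz by (simp add: PHI_def)
  moreover have "nrm r B m0 > 0" using iv_nz[OF m0(1) m0nz] nm_pos by (simp add: nrm_nm)
  ultimately have "real_of_int (pair r chi l) / nrm r B l < 0" using m0(3)
    by (smt (verit) divide_neg_pos of_int_less_0_iff)
  moreover have "nrm r B l \<ge> 0" by (simp add: nrm_nm nm_ge0)
  ultimately have lneg: "pair r chi l < 0"
    by (smt (verit) divide_nonneg_nonneg of_int_0_le_iff)
  define M where "M = {i\<in>{1..n}. pair r (chis i) l \<ge> 0}"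
  have A: "Lset n M \<subseteq> S_chi n r B chis chi l"
  proof
    fix x assume xL: "x \<in> Lset n M"
    have xl: "x \<in> Xl n r chis l" using xL by (auto simp: Xl_def Lset_def M_def)
    have ux: "unstable n r chis chi x" using lG xl lneg by (auto simp: unstable_def)
    have "PHI n r B chis chi x l"
      unfolding PHI_def
    proof (intro conjI ballI impI)
      show "indivisible r l" using P0 by (simp add: PHI_def)
      show "x \<in> Xl n r chis l" by (rule xl)
      fix m assume mG: "m \<in> Gam r" and mm: "m \<noteq> (\<lambda>_. 0) \<and> x \<in> Xl n r chis m"
      have "x0 \<in> Xl n r chis m"
        using mm xL x0l by (auto simp: Xl_def Lset_def M_def)
      then show "real_of_int (pair r chi l) / nrm r B l \<le> real_of_int (pair r chi m) / nrm r B m"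
        using P0 mG mm by (simp add: PHI_def)
    qed
    then have "lam_chi n r B chis chi x = l" using lamEq[OF ux] by simp
    then show "x \<in> S_chi n r B chis chi l" using ux by (simp add: S_chi_def)
  qed
  have Bm: "M' \<subseteq> M" if "M' \<subseteq> {1..n}" "Lset n M' \<subseteq> S_chi n r B chis chi l" for M'
  proof
    fix i assume iM: "i \<in> M'"
    define x :: "nat \<Rightarrow> complex" where "x = (\<lambda>i. if i \<in> M' then 1 else 0)"
    have "x \<in> Lset n M'" by (simp add: x_def Lset_def)
    then have "x \<in> S_chi n r B chis chi l" using that(2) by auto
    then have ux: "unstable n r chis chi x" and lx: "lam_chi n r B chis chi x = l"
      by (auto simp: S_chi_def)
    have "x \<in> Xl n r chis l" using lamP[OF ux] lx by (simp add: PHI_def)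
    moreover have "i \<in> {1..n}" using iM that(1) by auto
    ultimately show "i \<in> M" using iM by (auto simp: Xl_def x_def M_def not_less)
  qed
  have Msub: "M \<subseteq> {1..n}" by (auto simp: M_def)
  have maxM: "\<forall>M'. M' \<subseteq> {1..n} \<and> Lset n M' \<subseteq> S_chi n r B chis chi l \<and> M \<subseteq> M' \<longrightarrow> M' = M"
    using Bm by blast
  have V: "Vset ({1..n} - M) = Xl n r chis l"
    by (auto simp: Vset_def Xl_def M_def not_le)
  have ex1: "\<exists>!M. M \<subseteq> {1..n} \<and> Lset n M \<subseteq> S_chi n r B chis chi l \<and>
            (\<forall>M'. M' \<subseteq> {1..n} \<and> Lset n M' \<subseteq> S_chi n r B chis chi l \<and> M \<subseteq> M' \<longrightarrow> M' = M)"
  proof (rule ex1I[of _ M])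
    show "M \<subseteq> {1..n} \<and> Lset n M \<subseteq> S_chi n r B chis chi l \<and>
            (\<forall>M'. M' \<subseteq> {1..n} \<and> Lset n M' \<subseteq> S_chi n r B chis chi l \<and> M \<subseteq> M' \<longrightarrow> M' = M)"
      using Msub A maxM by blast
  next
    fix M'' assume H: "M'' \<subseteq> {1..n} \<and> Lset n M'' \<subseteq> S_chi n r B chis chi l \<and>
            (\<forall>M'. M' \<subseteq> {1..n} \<and> Lset n M' \<subseteq> S_chi n r B chis chi l \<and> M'' \<subseteq> M' \<longrightarrow> M' = M'')"
    then have "M'' \<subseteq> M" using Bm by blast
    then show "M'' = M" using H Msub A by blast
  qed
  show ?thesis using ex1 A maxM V unfolding M_def Let_def by blast
qed


end
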